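(* Let $f\in K^{\times}$ satisfy $f'=af$ for some $a\in k$, and let $g\in K$ satisfy a nonzero homogeneous linear differential equation with coefficients in $k$. Assume $f=P(g)$ for some nonconstant polynomial $P$ with coefficients in $k$. Then there exist $\theta\in K$ with $\theta'/\theta\in k$, an integer $n\in\mathbb{Z}_{\geq 0}$ and $c,d\in k$ such that $$f=\theta^{n}\quad\text{and}\quad g=c+d\theta.$$
   Context: $K$ is a differential field of characteristic zero (derivation $y\mapsto y'$), $k\subset K$ is an algebraically closed differential subfield, and $K$ and $k$ have the same field of constants $C$. *)

theory Defs
  imports "HOL-Computational_Algebra.Polynomial"
begin

definition derivation :: "('a::field \<Rightarrow> 'a) \<Rightarrow> bool" where
  "derivation D \<longleftrightarrow> (\<forall>x y. D (x + y) = D x + D y) \<and> (\<forall>x y. D (x * y) = x * D y + D x * y)"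

definition is_subfield :: "'a::field set \<Rightarrow> bool" where
  "is_subfield k \<longleftrightarrow> 0 \<in> k \<and> 1 \<in> k \<and> (\<forall>x\<in>k. \<forall>y\<in>k. x + y \<in> k \<and> x * y \<in> k)
     \<and> (\<forall>x\<in>k. - x \<in> k) \<and> (\<forall>x\<in>k. x \<noteq> 0 \<longrightarrow> inverse x \<in> k)"

definition differential_subfield :: "('a::field \<Rightarrow> 'a) \<Rightarrow> 'a set \<Rightarrow> bool" where
  "differential_subfield D k \<longleftrightarrow> is_subfield k \<and> (\<forall>x\<in>k. D x \<in> k)"

definition alg_closed_subfield :: "'a::field set \<Rightarrow> bool" where
  "alg_closed_subfield k \<longleftrightarrow> is_subfield k \<and>
     (\<forall>p. set (coeffs p) \<subseteq> k \<and> degree p \<ge> 1 \<longrightarrow> (\<exists>x\<in>k. poly p x = 0))"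

definition constants :: "('a::field \<Rightarrow> 'a) \<Rightarrow> 'a set" where
  "constants D = {x. D x = 0}"

definition satisfies_lin_ode :: "('a::field \<Rightarrow> 'a) \<Rightarrow> 'a set \<Rightarrow> 'a \<Rightarrow> bool" where
  "satisfies_lin_ode D k y \<longleftrightarrow> (\<exists>m::nat. \<exists>a::nat \<Rightarrow> 'a.
     (\<forall>i\<le>m. a i \<in> k) \<and> (\<exists>i\<le>m. a i \<noteq> 0) \<and> (\<Sum>i\<le>m. a i * (D ^^ i) y) = 0)"

end

theory Submission
  imports Defs
begin

locale dfield =
  fixes D :: "'a::field_char_0 \<Rightarrow> 'a" and k :: "'a set"
  assumes der: "derivation D" and dsub: "differential_subfield D k"
    and acl: "alg_closed_subfield k" and cst: "constants D \<inter> k = constants D"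
begin

lemma D_add: "D (x + y) = D x + D y" using der by (simp add: derivation_def)
lemma D_mult: "D (x * y) = x * D y + D x * y" using der by (simp add: derivation_def)
lemma D_0[simp]: "D 0 = 0" using D_add[of 0 0] by simp
lemma D_1[simp]: "D 1 = 0" using D_mult[of 1 1] by simp
lemma D_minus: "D (- x) = - D x" using D_add[of x "-x"] by (simp add: add_eq_0_iff2)
lemma D_diff: "D (x - y) = D x - D y" using D_add[of x "-y"] D_minus[of y] by simp
lemma D_power: "D (x ^ n) = of_nat n * x ^ (n - 1) * D x"
proof (induction n)
  case (Suc n) then show ?case
    by (cases n) (auto simp: D_mult algebra_simps)
qed simp
lemma D_sum: "D (sum f A) = (\<Sum>i\<in>A. D (f i))"
  by (induction A rule: infinite_finite_induct) (auto simp: D_add)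

lemma k0[simp]: "0 \<in> k" and k1[simp]: "1 \<in> k" and k_add: "x \<in> k \<Longrightarrow> y \<in> k \<Longrightarrow> x + y \<in> k"
  and k_mult: "x \<in> k \<Longrightarrow> y \<in> k \<Longrightarrow> x * y \<in> k" and k_uminus: "x \<in> k \<Longrightarrow> - x \<in> k"
  and k_inv: "x \<in> k \<Longrightarrow> inverse x \<in> k" and k_D: "x \<in> k \<Longrightarrow> D x \<in> k"
  using dsub by (auto simp: differential_subfield_def is_subfield_def)
lemma k_diff: "x \<in> k \<Longrightarrow> y \<in> k \<Longrightarrow> x - y \<in> k" using k_add k_uminus by (metis diff_conv_add_uminus)
lemma k_div: "x \<in> k \<Longrightarrow> y \<in> k \<Longrightarrow> x / y \<in> k" using k_mult k_inv by (simp add: divide_inverse)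
lemma k_of_nat: "of_nat n \<in> k" by (induction n) (auto intro: k_add)
lemma k_power: "x \<in> k \<Longrightarrow> x ^ n \<in> k" by (induction n) (auto intro: k_mult)
lemma k_sum: "(\<And>i. i \<in> A \<Longrightarrow> f i \<in> k) \<Longrightarrow> sum f A \<in> k"
  by (induction A rule: infinite_finite_induct) (auto intro: k_add)
lemma k_const: "D x = 0 \<Longrightarrow> x \<in> k" using cst by (auto simp: constants_def)

definition kp :: "'a poly \<Rightarrow> bool" where "kp B \<longleftrightarrow> (\<forall>i. coeff B i \<in> k)"

lemma kp_coeffs: "kp B \<longleftrightarrow> set (coeffs B) \<subseteq> k"
  unfolding kp_def using forall_coeffs_conv[of "\<lambda>c. c \<in> k" B] by auto
lemma kp_0[simp]: "kp 0" by (simp add: kp_def)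
lemma kp_pCons: "kp (pCons a p) \<longleftrightarrow> a \<in> k \<and> kp p"
  unfolding kp_def by (auto simp: coeff_pCons split: nat.splits)
lemma kp_const: "c \<in> k \<Longrightarrow> kp [:c:]" by (simp add: kp_pCons)
lemma kp_add: "kp p \<Longrightarrow> kp q \<Longrightarrow> kp (p + q)" by (simp add: kp_def k_add)
lemma kp_uminus: "kp p \<Longrightarrow> kp (- p)" by (simp add: kp_def k_uminus)
lemma kp_diff: "kp p \<Longrightarrow> kp q \<Longrightarrow> kp (p - q)" by (simp add: kp_def k_diff)
lemma kp_smult: "c \<in> k \<Longrightarrow> kp p \<Longrightarrow> kp (smult c p)" by (simp add: kp_def k_mult)
lemma kp_mult: "kp p \<Longrightarrow> kp q \<Longrightarrow> kp (p * q)" by (simp add: kp_def coeff_mult k_sum k_mult)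
lemma kp_1[simp]: "kp 1" by (simp add: kp_def)
lemma kp_power: "kp p \<Longrightarrow> kp (p ^ n)" by (induction n) (auto intro: kp_mult)
lemma kp_X: "kp [:0, 1:]" by (simp add: kp_pCons)
lemma kp_L: "r \<in> k \<Longrightarrow> kp [:-r, 1:]" by (simp add: kp_pCons k_uminus)
lemma kp_pderiv: "kp p \<Longrightarrow> kp (pderiv p)" unfolding kp_def coeff_pderiv by (metis k_mult k_of_nat)
lemma kp_sum: "(\<And>i. i \<in> A \<Longrightarrow> kp (f i)) \<Longrightarrow> kp (sum f A)"
  by (induction A rule: infinite_finite_induct) (auto intro: kp_add)
lemma kp_monom: "c \<in> k \<Longrightarrow> kp (monom c n)" by (simp add: kp_def coeff_monom)
lemma kp_synth: "kp p \<Longrightarrow> r \<in> k \<Longrightarrow> kp (synthetic_div p r)"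
proof (induction p)
  case (pCons a p)
  have "poly p r \<in> k" using pCons kp_pCons
    by (simp add: poly_altdef k_sum k_mult k_power kp_def)
  then show ?case using pCons by (simp add: kp_pCons)
qed simp

end

context dfield begin

lemma transc:
  assumes "g \<notin> k" "kp B" "poly B g = 0" shows "B = 0"
  using assms(2,3)
proof (induction "degree B" arbitrary: B rule: less_induct)
  case less
  show ?case
  proof (rule ccontr)
    assume B0: "B \<noteq> 0"
    show False
    proof (cases "degree B = 0")
      case True
      then obtain c where "B = [:c:]" by (metis degree_eq_zeroE)
      with less B0 show False by simp
    next
      case False
      then obtain x where x: "x \<in> k" "poly B x = 0"
        using acl less(2) by (auto simp: alg_closed_subfield_def kp_coeffs)
      define S where "S = synthetic_div B x"
      have BS: "B = [:-x, 1:] * S" using synthetic_div_correct'[of x B] x S_def by simp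
      have "g \<noteq> x" using assms(1) x by auto
      then have "poly S g = 0" using less(3) BS by simp
      moreover have "kp S" using kp_synth less(2) x S_def by simp
      moreover have "degree S < degree B" using False degree_synthetic_div[of B x] S_def by simp
      ultimately have "S = 0" using less(1) by blast
      then show False using BS B0 by simp
    qed
  qed
qed

lemma factor:
  assumes "kp B" "B \<noteq> 0" "r \<in> k"
  shows "\<exists>p B1. kp B1 \<and> B = [:-r, 1:] ^ p * B1 \<and> poly B1 r \<noteq> 0"
  using assms(1,2)
proof (induction "degree B" arbitrary: B rule: less_induct)
  case less
  show ?case
  proof (cases "poly B r = 0")
    case False
    then show ?thesis using less by (intro exI[of _ 0] exI[of _ B]) auto
  next
    case True
    define S where "S = synthetic_div B r"
    have BS: "B = [:-r, 1:] * S" using synthetic_div_correct'[of r B] True S_def by simp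
    have S0: "S \<noteq> 0" using BS less by auto
    have "degree B \<noteq> 0"
    proof
      assume "degree B = 0"
      then obtain c where "B = [:c:]" by (metis degree_eq_zeroE)
      with less True show False by simp
    qed
    then have "degree S < degree B" using degree_synthetic_div[of B r] S_def by simp
    moreover have "kp S" using kp_synth less(2) assms(3) S_def by simp
    ultimately obtain p B1 where kB1: "kp B1" and SB: "S = [:-r, 1:] ^ p * B1" and pB1: "poly B1 r \<noteq> 0"
      using less(1) S0 by blast
    moreover have "B = [:-r, 1:] ^ Suc p * B1" using BS SB by (simp only: power_Suc mult.assoc)
    then show ?thesis using kB1 pB1 by blast
  qed
qed

lemma deriv_poly:
  assumes "kp B"
  shows "\<exists>C. kp C \<and> degree C \<le> degree B \<and> D (poly B g) = poly C g + poly (pderiv B) g * D g"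
  using assms
proof (induction B)
  case 0
  then show ?case by (intro exI[of _ 0]) simp
next
  case (pCons a B1)
  have a: "a \<in> k" and k1: "kp B1" using pCons(3) by (auto simp: kp_pCons)
  show ?case
  proof (cases "B1 = 0")
    case True
    then show ?thesis using a k_D by (intro exI[of _ "[:D a:]"]) (auto simp: kp_pCons)
  next
    case False
    obtain C1 where C1: "kp C1" "degree C1 \<le> degree B1"
      "D (poly B1 g) = poly C1 g + poly (pderiv B1) g * D g" using pCons(2) k1 by blast
    show ?thesis
    proof (intro exI[of _ "pCons (D a) C1"] conjI)
      show "kp (pCons (D a) C1)" using C1 a k_D by (simp add: kp_pCons)
      show "degree (pCons (D a) C1) \<le> degree (pCons a B1)"
        using C1(2) False by (simp add: degree_pCons_le order_trans[OF degree_pCons_le])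
      show "D (poly (pCons a B1) g) = poly (pCons (D a) C1) g + poly (pderiv (pCons a B1)) g * D g"
        using C1(3) by (simp add: D_add D_mult pderiv_pCons algebra_simps)
    qed
  qed
qed

lemma ode_top:
  assumes "satisfies_lin_ode D k g"
  shows "\<exists>m a. (\<forall>i\<le>m. a i \<in> k) \<and> a m \<noteq> 0 \<and> (\<Sum>i\<le>m. a i * (D ^^ i) g) = 0"
proof -
  obtain m a where a: "\<forall>i\<le>m. a i \<in> k" "\<exists>i\<le>m. a i \<noteq> 0" "(\<Sum>i\<le>m. a i * (D ^^ i) g) = 0"
    using assms by (auto simp: satisfies_lin_ode_def)
  define m' where "m' = Max {i. i \<le> m \<and> a i \<noteq> 0}"
  have fin: "finite {i. i \<le> m \<and> a i \<noteq> 0}" by simp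
  have ne: "{i. i \<le> m \<and> a i \<noteq> 0} \<noteq> {}" using a(2) by auto
  have m'1: "m' \<le> m \<and> a m' \<noteq> 0" using Max_in[OF fin ne] m'_def by auto
  have m'2: "\<And>i. i \<le> m \<Longrightarrow> a i \<noteq> 0 \<Longrightarrow> i \<le> m'" using Max_ge[OF fin] m'_def by auto
  have "(\<Sum>i\<le>m. a i * (D ^^ i) g) = (\<Sum>i\<le>m'. a i * (D ^^ i) g)"
  proof (rule sum.mono_neutral_right)
    show "\<forall>i\<in>{..m} - {..m'}. a i * (D ^^ i) g = 0" using m'2 by fastforce
  qed (use m'1 in auto)
  then show ?thesis using a m'1 by (intro exI[of _ m'] exI[of _ a]) auto
qed

end

context dfield begin

lemma infty_case:
  assumes gk: "g \<notin> k" and kN: "kp N" and dN: "degree N \<ge> 2" and Dg: "D g = poly N g"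
    and ode: "satisfies_lin_ode D k g"
  shows False
proof -
  have "\<forall>i. \<exists>B. kp B \<and> degree B = 1 + i * (degree N - 1) \<and> (D ^^ i) g = poly B g"
  proof
    fix i show "\<exists>B. kp B \<and> degree B = 1 + i * (degree N - 1) \<and> (D ^^ i) g = poly B g"
    proof (induction i)
      case 0
      then show ?case by (intro exI[of _ "[:0, 1:]"]) (simp add: kp_X)
    next
      case (Suc i)
      then obtain B where B: "kp B" "degree B = 1 + i * (degree N - 1)" "(D ^^ i) g = poly B g" by blast
      obtain C where C: "kp C" "degree C \<le> degree B" "D (poly B g) = poly C g + poly (pderiv B) g * D g"
        using deriv_poly[OF B(1)] by blast
      have pB: "pderiv B \<noteq> 0" using B(2) by (simp add: pderiv_eq_0_iff)
      have N0: "N \<noteq> 0" using dN by auto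
      have d1: "degree (pderiv B * N) = degree B - 1 + degree N"
        using degree_mult_eq[OF pB N0] degree_pderiv[of B] by simp
      have d2: "degree (C + pderiv B * N) = degree (pderiv B * N)"
        by (rule degree_add_eq_right) (use C(2) d1 dN B(2) in simp)
      show ?case
      proof (intro exI[of _ "C + pderiv B * N"] conjI)
        show "kp (C + pderiv B * N)" using C(1) B(1) kN by (intro kp_add kp_mult kp_pderiv)
        show "degree (C + pderiv B * N) = 1 + Suc i * (degree N - 1)"
        proof -
          obtain d where dd: "degree N = d + 2" using dN by (metis add.commute le_Suc_ex)
          have "degree B - 1 + degree N = 1 + Suc i * (degree N - 1)" using B(2) by (simp add: dd)
          then show ?thesis using d2 d1 by simp
        qed
        show "(D ^^ Suc i) g = poly (C + pderiv B * N) g"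
          using B(3) C(3) Dg by simp
      qed
    qed
  qed
  then obtain Bf where Bf: "\<And>i. kp (Bf i)" "\<And>i. degree (Bf i) = 1 + i * (degree N - 1)"
    "\<And>i. (D ^^ i) g = poly (Bf i) g" by metis
  obtain m a where a: "\<forall>i\<le>m. a i \<in> k" "a m \<noteq> 0" "(\<Sum>i\<le>m. a i * (D ^^ i) g) = 0"
    using ode_top[OF ode] by blast
  define T where "T = (\<Sum>i\<le>m. smult (a i) (Bf i))"
  have "kp T" unfolding T_def using a(1) Bf(1) by (intro kp_sum kp_smult) auto
  moreover have "poly T g = 0" unfolding T_def poly_sum using a(3) Bf(3) by simp
  ultimately have T0: "T = 0" using transc[OF gk] by blast
  have mono: "degree (Bf i) < degree (Bf m)" if "i < m" for i
    using Bf(2) that dN by simp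
  have "coeff T (degree (Bf m)) = (\<Sum>i\<le>m. a i * coeff (Bf i) (degree (Bf m)))"
    unfolding T_def by (simp add: coeff_sum)
  also have "\<dots> = a m * coeff (Bf m) (degree (Bf m))"
  proof (rule sum.mono_neutral_right[of "{..m}" "{m}", simplified])
    show "\<forall>i\<in>{..m} - {m}. a i * coeff (Bf i) (degree (Bf m)) = 0"
      using mono by (auto simp: coeff_eq_0)
  qed
  also have "\<dots> \<noteq> 0"
  proof -
    have "Bf m \<noteq> 0" using Bf(2)[of m] by (metis add_is_0 one_neq_zero degree_0)
    then show ?thesis using a(2) by simp
  qed
  finally show False using T0 by simp
qed

end

context dfield begin

lemma pole_case:
  assumes gk: "g \<notin> k" and kM: "kp M1" and kN: "kp N" and r: "\<rho> \<in> k" and p: "p \<ge> 1"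
    and M1r: "poly M1 \<rho> \<noteq> 0" and Nr: "poly N \<rho> \<noteq> 0"
    and Dg: "D g * ((g - \<rho>) ^ p * poly M1 g) = poly N g"
    and ode: "satisfies_lin_ode D k g"
  shows False
proof -
  define y where "y = g - \<rho>"
  define m1 where "m1 = poly M1 g"
  define L where "L = [:-\<rho>, 1:]"
  define MP where "MP = L ^ p * M1"
  have kL: "kp L" using kp_L r L_def by simp
  have kMP: "kp MP" unfolding MP_def using kL kM by (intro kp_mult kp_power)
  have Ly: "poly L g = y" unfolding L_def y_def by simp
  have Lr: "poly L \<rho> = 0" unfolding L_def by simp
  have MPg: "poly MP g = y ^ p * m1" unfolding MP_def using Ly m1_def by simp
  have MPr: "poly MP \<rho> = 0" unfolding MP_def using Lr p by simp
  have y0: "y \<noteq> 0" using gk r y_def by auto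
  have M10: "M1 \<noteq> 0" using M1r by auto
  have m10: "m1 \<noteq> 0" using transc[OF gk kM] M10 m1_def by auto
  have Dg': "D g * poly MP g = poly N g" using Dg MPg y_def m1_def by simp
  have Delta: "\<exists>C. kp C \<and> poly MP g * D (poly B g) = poly C g" if kB: "kp B" for B
  proof -
    obtain C where C: "kp C" "D (poly B g) = poly C g + poly (pderiv B) g * D g"
      using deriv_poly[OF kB] by blast
    show ?thesis
    proof (intro exI[of _ "MP * C + pderiv B * N"] conjI)
      show "kp (MP * C + pderiv B * N)" using C(1) kMP kB kN by (intro kp_add kp_mult kp_pderiv)
      show "poly MP g * D (poly B g) = poly (MP * C + pderiv B * N) g"
        using C(2) Dg' by (simp add: algebra_simps)
    qed
  qed
  define DY where "DY = N - smult (D \<rho>) MP"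
  have kDY: "kp DY" unfolding DY_def using kN kMP k_D r by (intro kp_diff kp_smult)
  have DYg: "poly MP g * D y = poly DY g" unfolding DY_def y_def using Dg'
    by (simp add: D_diff algebra_simps)
  have DYr: "poly DY \<rho> \<noteq> 0" unfolding DY_def using MPr Nr by simp
  define qf :: "nat \<Rightarrow> nat" where "qf i = i * (p + 1) - 1" for i
  define ef :: "nat \<Rightarrow> nat" where "ef i = 2 ^ i - 1" for i
  have inv: "\<exists>A. kp A \<and> poly A \<rho> \<noteq> 0 \<and> (D ^^ i) g * y ^ qf i * m1 ^ ef i = poly A g"
    if "i \<ge> 1" for i
    using that
  proof (induction i)
    case 0 then show ?case by simp
  next
    case (Suc i)
    show ?case
    proof (cases "i = 0")
      case True
      then show ?thesis using kN Nr Dg by (intro exI[of _ N]) (simp add: qf_def ef_def y_def m1_def mult.assoc)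
    next
      case False
      then obtain A where A: "kp A" "poly A \<rho> \<noteq> 0" "(D ^^ i) g * y ^ qf i * m1 ^ ef i = poly A g"
        using Suc by auto
      define h where "h = (D ^^ i) g"
      define q where "q = qf i"
      define e where "e = ef i"
      have "q \<ge> 1" unfolding q_def qf_def using False p by (cases i) auto
      then obtain q0 where q0: "q = Suc q0" by (cases q) auto
      have qn0: "(of_nat q :: 'a) \<noteq> 0" using q0 by (metis of_nat_eq_0_iff nat.distinct(1))
      define W where "W = M1 ^ e"
      define w where "w = m1 ^ e"
      have kW: "kp W" unfolding W_def using kM by (intro kp_power)
      have Ww: "poly W g = w" unfolding W_def w_def m1_def by simp
      have Wr: "poly W \<rho> \<noteq> 0" unfolding W_def using M1r by simp
      obtain CA where CA: "kp CA" "poly MP g * D (poly A g) = poly CA g" using Delta[OF A(1)] by blast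
      obtain CW where CW: "kp CW" "poly MP g * D (poly W g) = poly CW g" using Delta[OF kW] by blast
      define Anew where "Anew = CA * L * W - A * (smult (of_nat q) DY * W + L * CW)"
      have hA: "h * (y ^ q * w) = poly A g" using A(3) unfolding h_def q_def e_def w_def by (simp add: mult.assoc)
      have E: "D h * (y ^ q * w) + h * D (y ^ q * w) = D (poly A g)"
        using hA[symmetric] by (simp add: D_mult algebra_simps)
      have Dyw: "D (y ^ q * w) = y ^ q * D w + of_nat q * y ^ q0 * D y * w"
      proof -
        have "D (y ^ q) = of_nat q * y ^ q0 * D y" using D_power[of y q] q0 by simp
        then show ?thesis by (simp add: D_mult)
      qed
      have key: "y ^ q0 * (D h * y ^ (q + p + 1) * m1 ^ (2 * e + 1)) = y ^ q0 * poly Anew g"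
      proof -
        have "y ^ q0 * poly Anew g = y ^ q0 * (poly CA g * y * w - poly A g * (of_nat q * poly DY g * w + y * poly CW g))"
          unfolding Anew_def using Ly Ww by simp
        also have "\<dots> = y ^ q0 * (poly MP g * D (poly A g) * y * w - h * (y ^ q * w) * (of_nat q * (poly MP g * D y) * w + y * (poly MP g * D w)))"
          using CA(2) CW(2) DYg hA Ww by simp
        also have "\<dots> = poly MP g * y ^ q * w * (D (poly A g) - h * D (y ^ q * w))"
          unfolding Dyw unfolding q0 by (simp add: algebra_simps)
        also have "\<dots> = poly MP g * y ^ q * w * (D h * (y ^ q * w))"
        proof -
          have "D (poly A g) - h * D (y ^ q * w) = D h * (y ^ q * w)" using E by (metis add_diff_cancel_right')
          then show ?thesis by (simp only:)
        qed
        also have "\<dots> = y ^ q0 * (D h * y ^ (q + p + 1) * m1 ^ (2 * e + 1))"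
          unfolding MPg w_def q0 by (simp add: algebra_simps power_add power_mult mult_2 power2_eq_square)
        finally show ?thesis by (rule sym)
      qed
      have fin: "D h * y ^ (q + p + 1) * m1 ^ (2 * e + 1) = poly Anew g"
        using key y0 by simp
      have qs: "qf (Suc i) = q + p + 1" unfolding q_def qf_def using False
        by (cases i) (auto simp: algebra_simps)
      have es: "ef (Suc i) = 2 * e + 1"
      proof -
        have "(2::nat) ^ i \<noteq> 0" by simp
        then obtain t where t: "(2::nat) ^ i = Suc t" using not0_implies_Suc by blast
        show ?thesis unfolding e_def ef_def by (simp add: t)
      qed
      show ?thesis
      proof (intro exI[of _ Anew] conjI)
        show "kp Anew" unfolding Anew_def using CA(1) kL kW A(1) kDY CW(1)
          by (intro kp_diff kp_mult kp_add kp_smult k_of_nat)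
        show "poly Anew \<rho> \<noteq> 0" unfolding Anew_def using Lr A(2) DYr Wr qn0 by simp
        show "(D ^^ Suc i) g * y ^ qf (Suc i) * m1 ^ ef (Suc i) = poly Anew g"
          using fin qs es h_def by simp
      qed
    qed
  qed
  obtain Af where Af: "\<And>i. i \<ge> 1 \<Longrightarrow> kp (Af i) \<and> poly (Af i) \<rho> \<noteq> 0 \<and>
      (D ^^ i) g * y ^ qf i * m1 ^ ef i = poly (Af i) g"
  proof -
    have "\<forall>i. \<exists>A. i \<ge> 1 \<longrightarrow> kp A \<and> poly A \<rho> \<noteq> 0 \<and> (D ^^ i) g * y ^ qf i * m1 ^ ef i = poly A g"
      using inv by blast
    from choice[OF this] obtain Af where "\<forall>i. i \<ge> 1 \<longrightarrow> kp (Af i) \<and> poly (Af i) \<rho> \<noteq> 0 \<and> (D ^^ i) g * y ^ qf i * m1 ^ ef i = poly (Af i) g"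
      by blast
    then show ?thesis using that by blast
  qed
  obtain m a where a: "\<forall>i\<le>m. a i \<in> k" "a m \<noteq> 0" "(\<Sum>i\<le>m. a i * (D ^^ i) g) = 0"
    using ode_top[OF ode] by blast
  have m1': "m \<ge> 1"
  proof (rule ccontr)
    assume "\<not> m \<ge> 1"
    then have "m = 0" by simp
    then have "a 0 * g = 0" using a(3) by simp
    then have "g = 0" using a(2) \<open>m = 0\<close> by simp
    then show False using gk by simp
  qed
  define Q where "Q = qf m"
  define EE where "EE = ef m"
  have "1 * 2 \<le> m * (p + 1)" by (rule mult_le_mono) (use m1' p in auto)
  then have Q1: "Q \<ge> 1" unfolding Q_def qf_def by linarith
  have qlt: "qf i < Q" if "1 \<le> i" "i < m" for i
  proof -
    have "i * (p + 1) < m * (p + 1)" by (rule mult_less_mono1) (use that in auto)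
    moreover have "1 \<le> i * (p + 1)" using that by simp
    ultimately show ?thesis unfolding Q_def qf_def by linarith
  qed
  have ele: "ef i \<le> EE" if "i \<le> m" for i
    unfolding EE_def ef_def using that by (simp add: diff_le_mono power_increasing)
  define T where "T i = (if i = 0 then [:0, 1:] * L ^ Q * M1 ^ EE
    else Af i * L ^ (Q - qf i) * M1 ^ (EE - ef i))" for i
  have Tg: "poly (T i) g = (D ^^ i) g * y ^ Q * m1 ^ EE" if "i \<le> m" for i
  proof (cases "i = 0")
    case True then show ?thesis unfolding T_def using Ly m1_def by simp
  next
    case False
    then have i1: "1 \<le> i" by simp
    have "qf i \<le> Q" using qlt[OF i1] that unfolding Q_def by (cases "i = m") auto
    then have "y ^ Q = y ^ qf i * y ^ (Q - qf i)" by (simp add: power_add[symmetric])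
    moreover have "m1 ^ EE = m1 ^ ef i * m1 ^ (EE - ef i)" using ele[OF that] by (simp add: power_add[symmetric])
    ultimately show ?thesis unfolding T_def using False Af[OF i1] Ly m1_def
      by (simp add: algebra_simps)
  qed
  have Tr: "poly (T i) \<rho> = 0" if "i < m" for i
  proof (cases "i = 0")
    case True then show ?thesis unfolding T_def using Lr Q1 by simp
  next
    case False
    then have "0 < Q - qf i" using qlt[of i] that by simp
    then show ?thesis unfolding T_def using False Lr by simp
  qed
  define TT where "TT = (\<Sum>i\<le>m. smult (a i) (T i))"
  have kT: "kp (T i)" if "i \<le> m" for i
    proof (cases "i = 0")
    case True
    have "kp ([:0, 1:] * L ^ Q * M1 ^ EE)" using kL kM kp_X by (intro kp_mult kp_power)
    then show ?thesis unfolding T_def using True by (simp only: if_True simp_thms)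
  next
    case False
    have "kp (Af i * L ^ (Q - qf i) * M1 ^ (EE - ef i))" using Af[of i] False kL kM by (intro kp_mult kp_power) auto
    then show ?thesis unfolding T_def using False by (simp only: if_False)
  qed
  have "kp TT" unfolding TT_def using a(1) kT by (intro kp_sum kp_smult) auto
  moreover have "poly TT g = 0"
  proof -
    have "poly TT g = (\<Sum>i\<le>m. a i * ((D ^^ i) g * y ^ Q * m1 ^ EE))"
      unfolding TT_def poly_sum using Tg by simp
    also have "\<dots> = (\<Sum>i\<le>m. a i * (D ^^ i) g) * (y ^ Q * m1 ^ EE)"
      by (simp add: sum_distrib_right mult.assoc)
    finally show ?thesis using a(3) by simp
  qed
  ultimately have "TT = 0" using transc[OF gk] by blast
  then have "poly TT \<rho> = 0" by simp
  moreover have "poly TT \<rho> = a m * poly (T m) \<rho>"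
  proof -
    have "poly TT \<rho> = (\<Sum>i\<le>m. a i * poly (T i) \<rho>)" unfolding TT_def poly_sum by simp
    also have "\<dots> = (\<Sum>i\<in>{m}. a i * poly (T i) \<rho>)"
      by (rule sum.mono_neutral_right) (use Tr in auto)
    finally show ?thesis by simp
  qed
  moreover have "poly (T m) \<rho> \<noteq> 0" unfolding T_def using m1' Af[OF m1'] M1r by (simp add: Q_def EE_def)
  ultimately show False using a(2) by simp
qed

end

context dfield begin

lemma poly_deg1: "degree p \<le> 1 \<Longrightarrow> poly p x = coeff p 0 + x * coeff p 1"
proof -
  assume d: "degree p \<le> 1"
  have "p = [:coeff p 0, coeff p 1:]"
  proof (rule poly_eqI)
    fix n show "coeff p n = coeff [:coeff p 0, coeff p 1:] n"
      using d by (cases n; cases "n - 1") (auto simp: coeff_pCons coeff_eq_0)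
  qed
  then show ?thesis by (metis add.right_neutral mult.right_neutral mult_zero_right poly_pCons poly_0)
qed

lemma linear_deriv:
  assumes gk: "g \<notin> k" and ode: "satisfies_lin_ode D k g"
    and M0: "kp M0" "M0 \<noteq> 0" and N0: "kp N0" and eq0: "D g * poly M0 g = poly N0 g"
  shows "\<exists>\<alpha> \<beta>. \<alpha> \<in> k \<and> \<beta> \<in> k \<and> D g = \<alpha> * g + \<beta>"
proof -
  define S where "S = {d. \<exists>M N. kp M \<and> kp N \<and> M \<noteq> 0 \<and> degree M = d \<and> D g * poly M g = poly N g}"
  have "degree M0 \<in> S" unfolding S_def using M0 N0 eq0 by blast
  then have "(LEAST d. d \<in> S) \<in> S" by (rule LeastI)
  then obtain M N where MN: "kp M" "kp N" "M \<noteq> 0" "D g * poly M g = poly N g"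
    and dM: "degree M = (LEAST d. d \<in> S)" unfolding S_def by blast
  have minim: "degree M \<le> degree M'" if "kp M'" "kp N'" "M' \<noteq> 0" "D g * poly M' g = poly N' g" for M' N'
  proof -
    have "degree M' \<in> S" unfolding S_def using that by blast
    then show ?thesis unfolding dM by (rule Least_le)
  qed
  show ?thesis
  proof (cases "degree M = 0")
    case True
    then obtain c where c: "M = [:c:]" by (metis degree_eq_zeroE)
    have c0: "c \<noteq> 0" using c MN(3) by simp
    have ck: "c \<in> k" using MN(1) c by (simp add: kp_pCons)
    define N2 where "N2 = smult (inverse c) N"
    have kN2: "kp N2" unfolding N2_def using MN(2) ck k_inv by (intro kp_smult)
    have Dg: "D g = poly N2 g" unfolding N2_def using MN(4) c c0 by (simp add: field_simps)
    show ?thesis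
    proof (cases "degree N2 \<ge> 2")
      case True
      then show ?thesis using infty_case[OF gk kN2 True Dg ode] by simp
    next
      case False
      then have "D g = coeff N2 1 * g + coeff N2 0" using Dg poly_deg1[of N2 g] by (simp add: algebra_simps)
      then show ?thesis using kN2 by (auto simp: kp_def)
    qed
  next
    case False
    then obtain \<rho> where r: "\<rho> \<in> k" "poly M \<rho> = 0"
      using acl MN(1) by (auto simp: alg_closed_subfield_def kp_coeffs)
    have Nr: "poly N \<rho> \<noteq> 0"
    proof
      assume Nr: "poly N \<rho> = 0"
      define M2 where "M2 = synthetic_div M \<rho>"
      define N2 where "N2 = synthetic_div N \<rho>"
      have M2: "M = [:-\<rho>, 1:] * M2" using synthetic_div_correct'[of \<rho> M] r M2_def by simp
      have N2: "N = [:-\<rho>, 1:] * N2" using synthetic_div_correct'[of \<rho> N] Nr N2_def by simp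
      have "g - \<rho> \<noteq> 0" using gk r by auto
      moreover have "(g - \<rho>) * (D g * poly M2 g) = (g - \<rho>) * poly N2 g"
        using MN(4) M2 N2 by (simp add: algebra_simps)
      ultimately have e2: "D g * poly M2 g = poly N2 g" by simp
      have "M2 \<noteq> 0" using M2 MN(3) by auto
      moreover have "kp M2" "kp N2" using kp_synth MN r M2_def N2_def by auto
      ultimately have "degree M \<le> degree M2" using minim e2 by blast
      moreover have "degree M2 < degree M" using False degree_synthetic_div[of M \<rho>] M2_def by simp
      ultimately show False by simp
    qed
    obtain p M1 where pM: "kp M1" "M = [:-\<rho>, 1:] ^ p * M1" "poly M1 \<rho> \<noteq> 0"
      using factor[OF MN(1) MN(3) r(1)] by blast
    have p1: "p \<ge> 1"
    proof (rule ccontr)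
      assume "\<not> p \<ge> 1" then have "p = 0" by simp
      then show False using pM r by simp
    qed
    have "D g * ((g - \<rho>) ^ p * poly M1 g) = poly N g" using MN(4) pM(2) by simp
    then have False using pole_case[OF gk pM(1) MN(2) r(1) p1 pM(3) Nr _ ode] by blast
    then show ?thesis by simp
  qed
qed

end

context dfield begin

lemma D_inverse: "w \<noteq> 0 \<Longrightarrow> D (inverse w) = - D w * inverse w * inverse w"
proof -
  assume w: "w \<noteq> 0"
  have "D (w * inverse w) = 0" using w by simp
  then have "w * D (inverse w) + D w * inverse w = 0" by (simp add: D_mult)
  then have "w * D (inverse w) = - D w * inverse w" by (simp add: eq_neg_iff_add_eq_0)
  moreover have "D (inverse w) = inverse w * (w * D (inverse w))" using w by (simp add: mult.assoc[symmetric])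
  ultimately show ?thesis by (simp add: algebra_simps)
qed

lemma main:
  assumes f0: "f \<noteq> 0" and ak: "a \<in> k" and Df: "D f = a * f" and ode: "satisfies_lin_ode D k g"
    and kP: "kp P" and dP: "degree P \<ge> 1" and fP: "f = poly P g"
  shows "\<exists>\<theta> (n::nat) c d. \<theta> \<noteq> 0 \<and> D \<theta> / \<theta> \<in> k \<and> c \<in> k \<and> d \<in> k \<and>
           f = \<theta> ^ n \<and> g = c + d * \<theta>"
proof (cases "g \<in> k")
  case True
  then show ?thesis using f0 Df ak
    by (intro exI[of _ f] exI[of _ "1::nat"] exI[of _ g] exI[of _ 0]) simp
next
  case False
  note gk = False
  have P0: "P \<noteq> 0" using dP by auto
  obtain C where C: "kp C" "D (poly P g) = poly C g + poly (pderiv P) g * D g"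
    using deriv_poly[OF kP] by blast
  have "D g * poly (pderiv P) g = poly (smult a P - C) g" using C(2) Df fP by (simp add: algebra_simps)
  moreover have "pderiv P \<noteq> 0" using dP by (simp add: pderiv_eq_0_iff)
  moreover have "kp (pderiv P)" "kp (smult a P - C)" using kP C ak by (auto intro: kp_pderiv kp_diff kp_smult)
  ultimately obtain \<alpha> \<beta> where ab: "\<alpha> \<in> k" "\<beta> \<in> k" "D g = \<alpha> * g + \<beta>"
    using linear_deriv[OF gk ode] by blast
  have root: "D (g - r) = \<alpha> * (g - r)" if r: "r \<in> k" "poly P r = 0" for r
  proof -
    obtain e Q where Q: "kp Q" "P = [:-r, 1:] ^ e * Q" "poly Q r \<noteq> 0"
      using factor[OF kP P0 r(1)] by blast
    have "e \<noteq> 0" using Q r by (cases e) auto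
    then obtain e0 where e0: "e = Suc e0" by (cases e) auto
    define y where "y = g - r"
    define Qg where "Qg = poly Q g"
    define \<gamma> where "\<gamma> = \<alpha> * r + \<beta> - D r"
    have \<gamma>k: "\<gamma> \<in> k" unfolding \<gamma>_def using ab r k_D by (intro k_diff k_add k_mult)
    have y0: "y \<noteq> 0" using gk r y_def by auto
    have fy: "f = y ^ e * Qg" using fP Q(2) y_def Qg_def by simp
    obtain CQ where CQ: "kp CQ" "D Qg = poly CQ g + poly (pderiv Q) g * D g"
      using deriv_poly[OF Q(1)] Qg_def by blast
    define Z where "Z = CQ + pderiv Q * [:\<beta>, \<alpha>:]"
    have "kp [:\<beta>, \<alpha>:]" using ab(1,2) by (simp add: kp_pCons)
    then have kZ: "kp Z" unfolding Z_def using CQ(1) Q(1) by (intro kp_add kp_mult kp_pderiv)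
    have DQ: "D Qg = poly Z g" unfolding Z_def using CQ(2) ab(3) by (simp add: algebra_simps)
    have Dy: "D y = \<alpha> * y + \<gamma>" unfolding y_def \<gamma>_def using ab(3) by (simp add: D_diff algebra_simps)
    have "D f = of_nat e * y ^ e0 * D y * Qg + y ^ e * D Qg"
      using fy D_power[of y e] e0 by (simp add: D_mult algebra_simps)
    then have "of_nat e * y ^ e0 * (\<alpha> * y + \<gamma>) * Qg + y ^ e * poly Z g = a * (y ^ e * Qg)"
      using Df fy Dy DQ by simp
    then have "y ^ e0 * (of_nat e * (\<alpha> * y + \<gamma>) * Qg + y * poly Z g - a * y * Qg) = 0"
      unfolding e0 by (simp add: algebra_simps)
    then have br: "of_nat e * (\<alpha> * y + \<gamma>) * Qg + y * poly Z g - a * y * Qg = 0" using y0 by simp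
    define R where "R = smult (of_nat e * \<gamma>) Q + [:-r, 1:] * (smult (of_nat e * \<alpha>) Q + Z - smult a Q)"
    have kR: "kp R" unfolding R_def using Q(1) kZ ab \<gamma>k r ak
      by (intro kp_add kp_mult kp_smult kp_diff kp_L k_mult k_of_nat)
    have "poly R g = 0" unfolding R_def using br y_def Qg_def by (simp add: algebra_simps)
    then have "R = 0" using transc[OF gk kR] by blast
    then have "poly R r = 0" by simp
    then have "of_nat e * \<gamma> * poly Q r = 0" unfolding R_def by simp
    then have "\<gamma> = 0" using Q(3) \<open>e \<noteq> 0\<close> by simp
    then show ?thesis using Dy y_def by simp
  qed
  obtain r where r: "r \<in> k" "poly P r = 0"
    using acl kP dP by (auto simp: alg_closed_subfield_def kp_coeffs)
  obtain e Q where Q: "kp Q" "P = [:-r, 1:] ^ e * Q" "poly Q r \<noteq> 0"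
    using factor[OF kP P0 r(1)] by blast
  have e0: "e \<noteq> 0" using Q r by (cases e) auto
  define y where "y = g - r"
  have y0: "y \<noteq> 0" using gk r y_def by auto
  have Dy: "D y = \<alpha> * y" using root[OF r] y_def by simp
  have dQ: "degree Q = 0"
  proof (rule ccontr)
    assume "degree Q \<noteq> 0"
    then obtain s where s: "s \<in> k" "poly Q s = 0"
      using acl Q(1) by (auto simp: alg_closed_subfield_def kp_coeffs)
    have sr: "s \<noteq> r" using s Q(3) by auto
    have Ps: "poly P s = 0" using Q(2) s by simp
    define w where "w = s - r"
    have w0: "w \<noteq> 0" using sr w_def by simp
    have "D w = D (g - r) - D (g - s)" unfolding w_def by (simp add: D_diff)
    also have "\<dots> = \<alpha> * w" by (simp only: root[OF r] root[OF s(1) Ps]) (simp add: w_def algebra_simps)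
    finally have Dw: "D w = \<alpha> * w" .
    define z where "z = y * inverse w"
    have "D z = y * (- D w * inverse w * inverse w) + D y * inverse w"
      unfolding z_def using D_inverse[OF w0] by (simp add: D_mult)
    also have "\<dots> = 0" using Dw Dy w0 by (simp add: field_simps)
    finally have "z \<in> k" using k_const by blast
    moreover have "w \<in> k" using s r w_def k_diff by simp
    ultimately have "z * w \<in> k" by (rule k_mult)
    moreover have "z * w = y" using w0 z_def by (simp add: mult.assoc)
    ultimately have "y \<in> k" by simp
    then have "g \<in> k" using y_def r k_add by (metis diff_add_cancel)
    then show False using gk by simp
  qed
  then obtain u where u: "Q = [:u:]" by (metis degree_eq_zeroE)
  have u0: "u \<noteq> 0" using Q(3) u by simp
  have uk: "u \<in> k" using Q(1) u by (simp add: kp_pCons)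
  have fy: "f = u * y ^ e" using fP Q(2) u y_def by simp
  define V where "V = monom 1 e - [:u:]"
  have "degree V = e" unfolding V_def using e0
    by (metis degree_monom_eq degree_pCons_0 degree_add_eq_left diff_conv_add_uminus
        degree_minus one_neq_zero not_gr_zero)
  moreover have "kp V" unfolding V_def using uk by (intro kp_diff kp_monom kp_const) simp_all
  ultimately obtain v where v: "v \<in> k" "poly V v = 0"
    using acl e0 by (auto simp: alg_closed_subfield_def kp_coeffs)
  have ve: "v ^ e = u" using v(2) by (simp add: V_def poly_monom)
  have v0: "v \<noteq> 0" using ve u0 e0 by auto
  define \<theta> where "\<theta> = v * y"
  have t1: "\<theta> \<noteq> 0" using v0 y0 \<theta>_def by simp
  have "D \<theta> / \<theta> = (v * \<alpha> + D v) / v" unfolding \<theta>_def using Dy y0 v0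
    by (simp add: D_mult field_simps)
  then have t2: "D \<theta> / \<theta> \<in> k" using v ab k_D by (simp add: k_div k_add k_mult)
  have t3: "inverse v \<in> k" using v k_inv by simp
  have t4: "f = \<theta> ^ e" unfolding \<theta>_def using fy ve by (simp add: power_mult_distrib)
  have t5: "g = r + inverse v * \<theta>" unfolding \<theta>_def y_def using v0 by (simp add: mult.assoc[symmetric])
  show ?thesis using t1 t2 t3 t4 t5 r(1) by blast
qed

end

theorem corollary13:
  fixes D :: "'a::field_char_0 \<Rightarrow> 'a" and k :: "'a set"
    and f g a :: 'a and P :: "'a poly"
  assumes "derivation D"
    and "differential_subfield D k"
    and "alg_closed_subfield k"
    and "constants D \<inter> k = constants D"
    and "f \<noteq> 0" and "a \<in> k" and "D f = a * f"
    and "satisfies_lin_ode D k g"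
    and "set (coeffs P) \<subseteq> k" and "degree P \<ge> 1"
    and "f = poly P g"
  shows "\<exists>\<theta> (n::nat) c d. \<theta> \<noteq> 0 \<and> D \<theta> / \<theta> \<in> k \<and> c \<in> k \<and> d \<in> k \<and>
           f = \<theta> ^ n \<and> g = c + d * \<theta>"
proof -
  interpret dfield D k using assms(1-4) by unfold_locales
  have "kp P" using assms(9) by (simp add: kp_coeffs)
  then show ?thesis using main[OF assms(5-8) _ assms(10,11)] by blast
qed

end
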